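(* Let $\Omega$ be a finite set, $n\ge 1$, and let $P_i,Q_i$ ($i=1,\dots,n$) be strictly positive probability mass functions on $\Omega$. For each $i$ define the finite positive measure on $\mathbb R$ \[ \eta_i:=\sum_{\omega\in\Omega}\sqrt{P_i(\omega)Q_i(\omega)}\,\delta_{\frac12\log\frac{P_i(\omega)}{Q_i(\omega)}}, \] where $\delta_u$ is the Dirac mass at $u\in\mathbb R$. Then \[ \mathrm{TV}\Big(\bigotimes_{i=1}^n P_i,\bigotimes_{i=1}^n Q_i\Big)=T(\eta_1*\cdots*\eta_n), \] where for a finite positive measure $\eta$ on $\mathbb R$, $T(\eta):=\frac12\int_{\mathbb R}|e^x-e^{-x}|\,\eta(dx)$.
   Context: $*$ denotes convolution of finite positive measures on $\mathbb R$ (the pushforward of the product measure under addition). For probability measures $\mu,\nu$ on a finite set, $\mathrm{TV}(\mu,\nu)=\frac12\sum_\omega|\mu(\omega)-\nu(\omega)|$. *)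

theory Defs
  imports "HOL-Probability.Probability"
begin

definition pos_pmf_on :: "'a set \<Rightarrow> ('a \<Rightarrow> real) \<Rightarrow> bool" where
  "pos_pmf_on \<Omega> p \<longleftrightarrow> (\<forall>w\<in>\<Omega>. p w > 0) \<and> (\<Sum>w\<in>\<Omega>. p w) = 1"

definition TV :: "'a set \<Rightarrow> ('a \<Rightarrow> real) \<Rightarrow> ('a \<Rightarrow> real) \<Rightarrow> real" where
  "TV S mu nu = (1/2) * (\<Sum>w\<in>S. \<bar>mu w - nu w\<bar>)"

definition prod_pmf_fun :: "nat \<Rightarrow> (nat \<Rightarrow> 'a \<Rightarrow> real) \<Rightarrow> (nat \<Rightarrow> 'a) \<Rightarrow> real" where
  "prod_pmf_fun n P w = (\<Prod>i\<in>{1..n}. P i (w i))"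

definition dirac_sum :: "'a set \<Rightarrow> ('a \<Rightarrow> real) \<Rightarrow> ('a \<Rightarrow> real) \<Rightarrow> real measure" where
  "dirac_sum \<Omega> c x = measure_of UNIV (sets borel)
      (\<lambda>A. ennreal (\<Sum>w\<in>\<Omega>. c w * indicator A (x w)))"

definition eta :: "'a set \<Rightarrow> ('a \<Rightarrow> real) \<Rightarrow> ('a \<Rightarrow> real) \<Rightarrow> real measure" where
  "eta \<Omega> p q = dirac_sum \<Omega> (\<lambda>w. sqrt (p w * q w)) (\<lambda>w. (1/2) * ln (p w / q w))"

fun conv_upto :: "(nat \<Rightarrow> real measure) \<Rightarrow> nat \<Rightarrow> real measure" where
  "conv_upto e 0 = return borel 0"
| "conv_upto e (Suc 0) = e 1"
| "conv_upto e (Suc (Suc k)) = convolution (conv_upto e (Suc k)) (e (Suc (Suc k)))"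

definition T_fun :: "real measure \<Rightarrow> real" where
  "T_fun M = (1/2) * (\<integral>x. \<bar>exp x - exp (- x)\<bar> \<partial>M)"

end

theory Submission imports Defs begin

definition DD :: "'b set \<Rightarrow> ('b \<Rightarrow> real) \<Rightarrow> ('b \<Rightarrow> real) \<Rightarrow> real measure" where
  "DD S c x = distr (density (count_space S) (\<lambda>w. ennreal (c w))) borel x"

lemma sets_DD[simp]: "sets (DD S c x) = sets borel" and space_DD[simp]: "space (DD S c x) = UNIV"
  by (simp_all add: DD_def)

lemma nn_integral_DD:
  assumes "finite S" "\<And>w. w \<in> S \<Longrightarrow> c w \<ge> 0" "f \<in> borel_measurable borel"
  shows "(\<integral>\<^sup>+y. f y \<partial>DD S c x) = (\<Sum>w\<in>S. ennreal (c w) * f (x w))"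
  unfolding DD_def using assms
  by (simp add: nn_integral_distr nn_integral_density nn_integral_count_space_finite)

lemma emeasure_DD:
  assumes "finite S" "\<And>w. w \<in> S \<Longrightarrow> c w \<ge> 0" "A \<in> sets borel"
  shows "emeasure (DD S c x) A = ennreal (\<Sum>w\<in>S. c w * indicator A (x w))"
proof -
  have "emeasure (DD S c x) A = (\<integral>\<^sup>+y. indicator A y \<partial>DD S c x)"
    using assms by simp
  also have "\<dots> = (\<Sum>w\<in>S. ennreal (c w) * indicator A (x w))"
    using assms by (intro nn_integral_DD) auto
  also have "\<dots> = (\<Sum>w\<in>S. ennreal (c w * indicator A (x w)))"
    by (intro sum.cong) (auto simp: indicator_def)
  also have "\<dots> = ennreal (\<Sum>w\<in>S. c w * indicator A (x w))"
    by (rule sum_ennreal) (use assms in auto)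
  finally show ?thesis .
qed

lemma finite_measure_DD:
  assumes "finite S" "\<And>w. w \<in> S \<Longrightarrow> c w \<ge> 0"
  shows "finite_measure (DD S c x)"
  by (rule finite_measureI) (use emeasure_DD[OF assms, where A=UNIV and x=x] in simp)

lemma integral_DD:
  assumes "finite S" "\<And>w. w \<in> S \<Longrightarrow> c w \<ge> 0" "f \<in> borel_measurable borel"
  shows "(\<integral>y. f y \<partial>DD S c x) = (\<Sum>w\<in>S. c w * f (x w))"
proof -
  have "(\<integral>y. f y \<partial>DD S c x) = (\<integral>w. f (x w) \<partial>density (count_space S) (\<lambda>w. ennreal (c w)))"
    unfolding DD_def using assms by (subst integral_distr) auto
  also have "\<dots> = (\<integral>w. c w *\<^sub>R f (x w) \<partial>count_space S)"
    using assms by (intro integral_density) (auto simp: AE_count_space)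
  also have "\<dots> = (\<Sum>w\<in>S. c w * f (x w))"
    using assms by (simp add: lebesgue_integral_count_space_finite)
  finally show ?thesis .
qed

lemma dirac_sum_DD:
  assumes "finite S" "\<And>w. w \<in> S \<Longrightarrow> c w \<ge> 0"
  shows "dirac_sum S c x = DD S c x"
proof -
  have "dirac_sum S c x = measure_of UNIV (sets borel) (emeasure (DD S c x))"
    unfolding dirac_sum_def
  proof (rule measure_of_eq)
    fix a :: "real set" assume "a \<in> sigma_sets UNIV (sets borel)"
    then have a: "a \<in> sets borel" by (metis sets.sigma_sets_eq space_borel)
    then show "ennreal (\<Sum>w\<in>S. c w * indicator a (x w)) = emeasure (DD S c x) a"
      using emeasure_DD[OF assms a] by simp
  qed simp
  also have "\<dots> = DD S c x"
    using measure_of_of_measure[of "DD S c x"] by simp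
  finally show ?thesis .
qed

lemma DD_eqI:
  assumes "finite S" "\<And>w. w \<in> S \<Longrightarrow> c w \<ge> 0" "finite S'" "\<And>w. w \<in> S' \<Longrightarrow> c' w \<ge> 0"
   and "\<And>A. A \<in> sets borel \<Longrightarrow> (\<Sum>w\<in>S. c w * indicator A (x w)) = (\<Sum>w\<in>S'. c' w * indicator A (x' w))"
  shows "DD S c x = DD S' c' x'"
  by (rule measure_eqI) (use assms in \<open>simp_all add: emeasure_DD\<close>)

lemma conv_DD:
  assumes "finite S" "\<And>w. w \<in> S \<Longrightarrow> c w \<ge> 0" "finite S'" "\<And>w. w \<in> S' \<Longrightarrow> c' w \<ge> 0"
  shows "convolution (DD S c x) (DD S' c' x') = DD (S \<times> S') (\<lambda>(a,b). c a * c' b) (\<lambda>(a,b). x a + x' b)"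
proof (rule measure_eqI)
  fix A :: "real set" assume A: "A \<in> sets (convolution (DD S c x) (DD S' c' x'))"
  hence A': "A \<in> sets borel" by simp
  have "emeasure (convolution (DD S c x) (DD S' c' x')) A =
     (\<integral>\<^sup>+y. \<integral>\<^sup>+z. indicator A (y + z) \<partial>DD S' c' x' \<partial>DD S c x)"
    using assms A' by (intro convolution_emeasure') (auto intro: finite_measure_DD)
  also have "\<dots> = (\<integral>\<^sup>+y. ennreal (\<Sum>b\<in>S'. c' b * indicator A (y + x' b)) \<partial>DD S c x)"
  proof (rule nn_integral_cong)
    fix y
    have m: "(\<lambda>z. y + z) -` A \<in> sets borel"
      using A' measurable_sets[of "\<lambda>z. y + z" borel borel A] by simp
    have "(\<integral>\<^sup>+z. indicator A (y + z) \<partial>DD S' c' x') = emeasure (DD S' c' x') ((\<lambda>z. y + z) -` A)"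
    proof -
      have "(\<integral>\<^sup>+z. indicator A (y + z) \<partial>DD S' c' x') = (\<integral>\<^sup>+z. indicator ((\<lambda>z. y + z) -` A) z \<partial>DD S' c' x')"
        by (intro nn_integral_cong) (simp split: split_indicator)
      also have "\<dots> = emeasure (DD S' c' x') ((\<lambda>z. y + z) -` A)"
        using m by (intro nn_integral_indicator) simp
      finally show ?thesis .
    qed
    also have "\<dots> = ennreal (\<Sum>b\<in>S'. c' b * indicator A (y + x' b))"
      using assms m by (subst emeasure_DD) (auto simp: indicator_def)
    finally show "(\<integral>\<^sup>+z. indicator A (y + z) \<partial>DD S' c' x') = ennreal (\<Sum>b\<in>S'. c' b * indicator A (y + x' b))" .
  qed
  also have "\<dots> = (\<Sum>a\<in>S. ennreal (c a) * ennreal (\<Sum>b\<in>S'. c' b * indicator A (x a + x' b)))"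
  proof (rule nn_integral_DD)
    note A'[measurable]
    show "(\<lambda>y. ennreal (\<Sum>b\<in>S'. c' b * indicator A (y + x' b))) \<in> borel_measurable borel"
      by measurable
  qed (use assms in auto)
  also have "\<dots> = ennreal (\<Sum>a\<in>S. c a * (\<Sum>b\<in>S'. c' b * indicator A (x a + x' b)))"
  proof -
    have nn: "\<And>a. a \<in> S \<Longrightarrow> 0 \<le> (\<Sum>b\<in>S'. c' b * indicator A (x a + x' b))"
      using assms by (intro sum_nonneg) auto
    have "(\<Sum>a\<in>S. ennreal (c a) * ennreal (\<Sum>b\<in>S'. c' b * indicator A (x a + x' b)))
       = (\<Sum>a\<in>S. ennreal (c a * (\<Sum>b\<in>S'. c' b * indicator A (x a + x' b))))"
      using assms nn by (intro sum.cong) (auto simp: ennreal_mult)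
    also have "\<dots> = ennreal (\<Sum>a\<in>S. c a * (\<Sum>b\<in>S'. c' b * indicator A (x a + x' b)))"
      using assms nn by (intro sum_ennreal) auto
    finally show ?thesis .
  qed
  also have "\<dots> = ennreal (\<Sum>w\<in>S \<times> S'. (\<lambda>(a,b). c a * c' b) w * indicator A ((\<lambda>(a,b). x a + x' b) w))"
    by (simp add: sum.cartesian_product sum_distrib_left mult.assoc split_def)
  also have "\<dots> = emeasure (DD (S \<times> S') (\<lambda>(a,b). c a * c' b) (\<lambda>(a,b). x a + x' b)) A"
    using assms A' by (subst emeasure_DD) auto
  finally show "emeasure (convolution (DD S c x) (DD S' c' x')) A = emeasure (DD (S \<times> S') (\<lambda>(a,b). c a * c' b) (\<lambda>(a,b). x a + x' b)) A" .
qed simp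


lemma DD_reindex:
  assumes "finite S" "\<And>w. w \<in> S \<Longrightarrow> c w \<ge> 0" "bij_betw h S' S"
  shows "DD S' (\<lambda>w. c (h w)) (\<lambda>w. x (h w)) = DD S c x"
proof -
  have fS': "finite S'" using assms bij_betw_finite by blast
  show ?thesis
  proof (rule DD_eqI)
    fix A :: "real set"
    show "(\<Sum>w\<in>S'. c (h w) * indicator A (x (h w))) = (\<Sum>w\<in>S. c w * indicator A (x w))"
      using sum.reindex_bij_betw[OF assms(3), of "\<lambda>w. c w * indicator A (x w)"] by simp
  qed (use assms fS' bij_betwE[OF assms(3)] in auto)
qed

lemma bij_first:
  "bij_betw (\<lambda>w. w 1) (PiE {1..Suc 0} (\<lambda>_. \<Omega>)) \<Omega>"
proof (rule bij_betw_byWitness[where f'="\<lambda>a. (\<lambda>i. if i = 1 then a else undefined)"])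
  show "\<forall>a\<in>PiE {1..Suc 0} (\<lambda>_. \<Omega>). (\<lambda>i. if i = 1 then a 1 else undefined) = a"
    by (auto simp: PiE_iff extensional_def fun_eq_iff)
qed (auto simp: PiE_iff extensional_def split: if_splits)

lemma bij_step:
  "bij_betw (\<lambda>w. (restrict w {1..Suc k}, w (Suc (Suc k))))
     (PiE {1..Suc (Suc k)} (\<lambda>_. \<Omega>)) (PiE {1..Suc k} (\<lambda>_. \<Omega>) \<times> \<Omega>)"
proof (rule bij_betw_byWitness[where f'="\<lambda>(v,a). v(Suc (Suc k) := a)"])
  show "\<forall>a\<in>PiE {1..Suc (Suc k)} (\<lambda>_. \<Omega>). (\<lambda>(v,a). v(Suc (Suc k) := a)) (restrict a {1..Suc k}, a (Suc (Suc k))) = a"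
    by (auto simp: PiE_iff extensional_def fun_eq_iff restrict_def)
  show "\<forall>a'\<in>PiE {1..Suc k} (\<lambda>_. \<Omega>) \<times> \<Omega>. (\<lambda>w. (restrict w {1..Suc k}, w (Suc (Suc k)))) ((\<lambda>(v,a). v(Suc (Suc k) := a)) a') = a'"
    by (auto simp: PiE_iff extensional_def fun_eq_iff restrict_def)
qed (auto simp: PiE_iff extensional_def)

lemma conv_upto_DD:
  assumes "finite \<Omega>"
    and e: "\<And>i. i \<in> {1..Suc k} \<Longrightarrow> e i = DD \<Omega> (c i) (x i)"
    and c: "\<And>i w. i \<in> {1..Suc k} \<Longrightarrow> w \<in> \<Omega> \<Longrightarrow> c i w \<ge> 0"
  shows "conv_upto e (Suc k) = DD (PiE {1..Suc k} (\<lambda>_. \<Omega>))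
            (\<lambda>w. \<Prod>i\<in>{1..Suc k}. c i (w i)) (\<lambda>w. \<Sum>i\<in>{1..Suc k}. x i (w i))"
  using e c
proof (induction k)
  case 0
  have "conv_upto e (Suc 0) = DD \<Omega> (c 1) (x 1)" using 0 by simp
  also have "\<dots> = DD (PiE {1..Suc 0} (\<lambda>_. \<Omega>)) (\<lambda>w. c 1 (w 1)) (\<lambda>w. x 1 (w 1))"
    by (rule DD_reindex[symmetric]) (use assms(1) 0 bij_first in auto)
  finally show ?case by simp
next
  case (Suc k)
  define C where "C = (\<lambda>w. \<Prod>i\<in>{1..Suc k}. c i (w i))"
  define X where "X = (\<lambda>w. \<Sum>i\<in>{1..Suc k}. x i (w i))"
  have IH: "conv_upto e (Suc k) = DD (PiE {1..Suc k} (\<lambda>_. \<Omega>)) C X"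
    unfolding C_def X_def by (rule Suc.IH) (use Suc.prems in auto)
  have fin: "finite (PiE {1..Suc k} (\<lambda>_. \<Omega>))" using assms(1) by (simp add: finite_PiE)
  have Cnn: "\<And>w. w \<in> PiE {1..Suc k} (\<lambda>_. \<Omega>) \<Longrightarrow> C w \<ge> 0"
    unfolding C_def using Suc.prems by (intro prod_nonneg) (auto simp: PiE_iff)
  have "conv_upto e (Suc (Suc k)) = convolution (conv_upto e (Suc k)) (e (Suc (Suc k)))" by simp
  also have "\<dots> = convolution (DD (PiE {1..Suc k} (\<lambda>_. \<Omega>)) C X) (DD \<Omega> (c (Suc (Suc k))) (x (Suc (Suc k))))"
    using IH Suc.prems by simp
  also have "\<dots> = DD (PiE {1..Suc k} (\<lambda>_. \<Omega>) \<times> \<Omega>) (\<lambda>(a,b). C a * c (Suc (Suc k)) b) (\<lambda>(a,b). X a + x (Suc (Suc k)) b)"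
    by (rule conv_DD) (use fin Cnn assms(1) Suc.prems in auto)
  also have "\<dots> = DD (PiE {1..Suc (Suc k)} (\<lambda>_. \<Omega>))
     (\<lambda>w. (\<lambda>(a,b). C a * c (Suc (Suc k)) b) (restrict w {1..Suc k}, w (Suc (Suc k))))
     (\<lambda>w. (\<lambda>(a,b). X a + x (Suc (Suc k)) b) (restrict w {1..Suc k}, w (Suc (Suc k))))"
    by (rule DD_reindex[symmetric]) (use fin Cnn assms(1) Suc.prems bij_step in \<open>auto intro!: mult_nonneg_nonneg\<close>)
  also have "\<dots> = DD (PiE {1..Suc (Suc k)} (\<lambda>_. \<Omega>))
            (\<lambda>w. \<Prod>i\<in>{1..Suc (Suc k)}. c i (w i)) (\<lambda>w. \<Sum>i\<in>{1..Suc (Suc k)}. x i (w i))"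
  proof -
    have "(\<lambda>w. (\<lambda>(a,b). C a * c (Suc (Suc k)) b) (restrict w {1..Suc k}, w (Suc (Suc k))))
        = (\<lambda>w. \<Prod>i\<in>{1..Suc (Suc k)}. c i (w i))"
      unfolding C_def by (auto simp: prod.cl_ivl_Suc fun_eq_iff intro!: prod.cong)
    moreover have "(\<lambda>w. (\<lambda>(a,b). X a + x (Suc (Suc k)) b) (restrict w {1..Suc k}, w (Suc (Suc k))))
        = (\<lambda>w. \<Sum>i\<in>{1..Suc (Suc k)}. x i (w i))"
      unfolding X_def by (auto simp: sum.cl_ivl_Suc fun_eq_iff intro!: sum.cong)
    ultimately show ?thesis by simp
  qed
  finally show ?case .
qed


lemma coord_id:
  fixes p q :: real
  assumes "p > 0" "q > 0"
  shows "sqrt (p * q) * exp ((1/2) * ln (p / q)) = p"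
    and "sqrt (p * q) * exp (- ((1/2) * ln (p / q))) = q"
proof -
  have e1: "exp ((1/2) * ln (p / q)) = sqrt (p / q)"
    using assms by (simp add: powr_half_sqrt[symmetric] powr_def)
  have e2: "exp (- ((1/2) * ln (p / q))) = sqrt (q / p)"
  proof -
    have "- ((1/2) * ln (p / q)) = (1/2) * ln (q / p)" using assms by (simp add: ln_div field_simps)
    then show ?thesis using assms by (simp add: powr_half_sqrt[symmetric] powr_def)
  qed
  have "sqrt (p * q) * sqrt (p / q) = sqrt (p * p)"
    using assms by (simp add: real_sqrt_mult[symmetric])
  then show "sqrt (p * q) * exp ((1/2) * ln (p / q)) = p" using assms e1 by simp
  have "sqrt (p * q) * sqrt (q / p) = sqrt (q * q)"
    using assms by (simp add: real_sqrt_mult[symmetric])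
  then show "sqrt (p * q) * exp (- ((1/2) * ln (p / q))) = q" using assms e2 by simp
qed

theorem theorem1:
  fixes \<Omega> :: "'a set" and n :: nat and P Q :: "nat \<Rightarrow> 'a \<Rightarrow> real"
  assumes "finite \<Omega>" and "n \<ge> 1"
    and "\<And>i. i \<in> {1..n} \<Longrightarrow> pos_pmf_on \<Omega> (P i)"
    and "\<And>i. i \<in> {1..n} \<Longrightarrow> pos_pmf_on \<Omega> (Q i)"
  shows "TV (PiE {1..n} (\<lambda>_. \<Omega>)) (prod_pmf_fun n P) (prod_pmf_fun n Q)
         = T_fun (conv_upto (\<lambda>i. eta \<Omega> (P i) (Q i)) n)"
proof -
  obtain k where k: "n = Suc k" using assms(2) by (cases n) auto
  define c where "c = (\<lambda>i w. sqrt (P i w * Q i w))"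
  define x where "x = (\<lambda>i w. (1/2) * ln (P i w / Q i w))"
  have Ppos: "\<And>i w. i \<in> {1..n} \<Longrightarrow> w \<in> \<Omega> \<Longrightarrow> P i w > 0"
    using assms(3) by (auto simp: pos_pmf_on_def)
  have Qpos: "\<And>i w. i \<in> {1..n} \<Longrightarrow> w \<in> \<Omega> \<Longrightarrow> Q i w > 0"
    using assms(4) by (auto simp: pos_pmf_on_def)
  have cnn: "\<And>i w. i \<in> {1..n} \<Longrightarrow> w \<in> \<Omega> \<Longrightarrow> c i w \<ge> 0"
    unfolding c_def using Ppos Qpos by (simp add: less_imp_le)
  let ?S = "PiE {1..n} (\<lambda>_. \<Omega>)"
  define C where "C = (\<lambda>w. \<Prod>i\<in>{1..n}. c i (w i))"
  define X where "X = (\<lambda>w. \<Sum>i\<in>{1..n}. x i (w i))"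
  have conv: "conv_upto (\<lambda>i. eta \<Omega> (P i) (Q i)) n = DD ?S C X"
    unfolding k C_def X_def
  proof (rule conv_upto_DD[OF assms(1)])
    fix i assume i: "i \<in> {1..Suc k}"
    show "eta \<Omega> (P i) (Q i) = DD \<Omega> (c i) (x i)"
      unfolding eta_def c_def x_def
      by (rule dirac_sum_DD) (use assms(1) i k Ppos Qpos in \<open>auto intro!: mult_nonneg_nonneg less_imp_le\<close>)
  qed (use cnn k in auto)
  have fin: "finite ?S" using assms(1) by (simp add: finite_PiE)
  have Cnn: "\<And>w. w \<in> ?S \<Longrightarrow> C w \<ge> 0"
    unfolding C_def using cnn by (intro prod_nonneg) (auto simp: PiE_iff)
  have "T_fun (DD ?S C X) = (1/2) * (\<Sum>w\<in>?S. C w * \<bar>exp (X w) - exp (- X w)\<bar>)"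
    unfolding T_fun_def using fin Cnn by (subst integral_DD) auto
  also have "\<dots> = (1/2) * (\<Sum>w\<in>?S. \<bar>prod_pmf_fun n P w - prod_pmf_fun n Q w\<bar>)"
  proof (intro arg_cong[where f="\<lambda>t. (1/2) * t"] sum.cong refl)
    fix w assume w: "w \<in> ?S"
    have pq: "\<And>i. i \<in> {1..n} \<Longrightarrow> P i (w i) > 0 \<and> Q i (w i) > 0"
      using w Ppos Qpos by (auto simp: PiE_iff)
    have "C w * exp (X w) = (\<Prod>i\<in>{1..n}. c i (w i) * exp (x i (w i)))"
      unfolding C_def X_def by (simp add: exp_sum prod.distrib)
    also have "\<dots> = prod_pmf_fun n P w"
      unfolding prod_pmf_fun_def c_def x_def using pq by (intro prod.cong refl coord_id) auto
    finally have 1: "C w * exp (X w) = prod_pmf_fun n P w" .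
    have "C w * exp (- X w) = (\<Prod>i\<in>{1..n}. c i (w i) * exp (- x i (w i)))"
      unfolding C_def X_def by (simp add: exp_sum prod.distrib sum_negf[symmetric])
    also have "\<dots> = prod_pmf_fun n Q w"
      unfolding prod_pmf_fun_def c_def x_def using pq by (intro prod.cong refl coord_id) auto
    finally have 2: "C w * exp (- X w) = prod_pmf_fun n Q w" .
    have "C w * \<bar>exp (X w) - exp (- X w)\<bar> = \<bar>C w * exp (X w) - C w * exp (- X w)\<bar>"
      using Cnn[OF w] by (metis abs_mult abs_of_nonneg right_diff_distrib)
    then show "C w * \<bar>exp (X w) - exp (- X w)\<bar> = \<bar>prod_pmf_fun n P w - prod_pmf_fun n Q w\<bar>"
      using 1 2 by simp
  qed
  finally show ?thesis unfolding conv TV_def by simp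
qed

end
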